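(* (1) The model admits a unique single-strain ($I_1$)-infection equilibrium $E_1=(\bar S,\bar V_1,\bar I_1,0)$ with $\bar S,\bar V_1,\bar I_1>0$ if and only if $\mathcal{R}_1>1$. (2) The model admits a single-strain ($I_2$)-infection equilibrium $E_2=(\tilde S,\tilde V_1,0,\tilde I_2)$ with $\tilde S,\tilde V_1,\tilde I_2>0$ if and only if $\mathcal{R}_2>1$. Moreover: - if $-\alpha_2r\mu-\alpha_2\mu^2+k\Lambda r<0$, then $E_2$ is unique; - if $-\alpha_2r\mu-\alpha_2\mu^2+k\Lambda r>0$, then the model has at most one single-strain ($I_2$)-infection equilibrium with $\tilde I_2$ in the interval $\left[\frac{-r\alpha_2-\alpha_2\mu+\sqrt{r\alpha_2(r\alpha_2+\alpha_2\mu+k\Lambda)}}{\alpha_2k},\frac{\Lambda}{\alpha_2}\right]$.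
   Context: The model is $\dot S=\Lambda-F_1(S,I_1)-F_2(S,I_2)-\lambda S$, $\dot V_1=rS-(\mu+kI_2)V_1$, $\dot I_1=F_1(S,I_1)-\alpha_1I_1$, $\dot I_2=F_2(S,I_2)+kI_2V_1-\alpha_2I_2$ on $\mathbb{R}^4_+$. The constants $\Lambda,\mu,r,k,\gamma_1,\gamma_2>0$ and $v_1,v_2\ge0$; $\lambda=r+\mu$ and $\alpha_i=\gamma_i+v_i+\mu$. For $i=1,2$ the incidence functions satisfy: - (H1) $F_i(S,I_i)=I_if_i(S,I_i)$ with $F_i,f_i\in C^2(\mathbb{R}^2_+,\mathbb{R}_+)$ and $F_i(0,I_i)=F_i(S,0)=0$; - (H2) $\partial f_i/\partial S>0$ and $\partial f_i/\partial I_i\le0$ on $\mathbb{R}^2_+$; - (H3) $\lim_{I_i\to0^+}F_i(S,I_i)/I_i$ exists and is positive for $S>0$. Let $S^0=\Lambda/\lambda$, $V_1^0=r\Lambda/(\mu\lambda)$ and $\sigma_i=\frac{\partial F_i}{\partial I_i}(S^0,0)$. Set $\mathcal{R}_1=\sigma_1/\alpha_1$ and $\mathcal{R}_2=\sigma_2/\alpha_2+\frac{kr\Lambda}{\alpha_2\mu\lambda}$. *)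

theory Defs
  imports "HOL-Analysis.Analysis"
begin

definition quadrant :: "(real \<times> real) set" where
  "quadrant = {p. fst p \<ge> 0 \<and> snd p \<ge> 0}"

definition C2_on :: "(real \<times> real \<Rightarrow> real) \<Rightarrow> (real \<times> real) set \<Rightarrow> bool" where
  "C2_on g A \<longleftrightarrow>
     (\<exists>(Dg :: real \<times> real \<Rightarrow> ((real \<times> real) \<Rightarrow>\<^sub>L real))
        (D2g :: real \<times> real \<Rightarrow> ((real \<times> real) \<Rightarrow>\<^sub>L ((real \<times> real) \<Rightarrow>\<^sub>L real))).
        (\<forall>x\<in>A. (g has_derivative blinfun_apply (Dg x)) (at x within A)) \<and>
        (\<forall>x\<in>A. (Dg has_derivative blinfun_apply (D2g x)) (at x within A)) \<and>
        continuous_on A D2g)"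

definition incidence_hyps :: "(real \<Rightarrow> real \<Rightarrow> real) \<Rightarrow> (real \<Rightarrow> real \<Rightarrow> real) \<Rightarrow> bool" where
  "incidence_hyps F f \<longleftrightarrow>
     \<comment> \<open>(H1)\<close>
     (\<forall>S\<ge>0. \<forall>I\<ge>0. F S I = I * f S I) \<and>
     C2_on (\<lambda>p. F (fst p) (snd p)) quadrant \<and> C2_on (\<lambda>p. f (fst p) (snd p)) quadrant \<and>
     (\<forall>S\<ge>0. \<forall>I\<ge>0. F S I \<ge> 0 \<and> f S I \<ge> 0) \<and>
     (\<forall>I\<ge>0. F 0 I = 0) \<and> (\<forall>S\<ge>0. F S 0 = 0) \<and>
     \<comment> \<open>(H2): partial derivatives (one-sided on the boundary)\<close>
     (\<forall>S\<ge>0. \<forall>I\<ge>0. \<exists>d>0. ((\<lambda>s. f s I) has_real_derivative d) (at S within {0..})) \<and>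
     (\<forall>S\<ge>0. \<forall>I\<ge>0. \<exists>d\<le>0. ((\<lambda>i. f S i) has_real_derivative d) (at I within {0..})) \<and>
     \<comment> \<open>(H3)\<close>
     (\<forall>S>0. \<exists>L>0. ((\<lambda>I. F S I / I) \<longlongrightarrow> L) (at_right 0))"

definition equilibrium ::
  "real \<Rightarrow> real \<Rightarrow> real \<Rightarrow> real \<Rightarrow> real \<Rightarrow> real \<Rightarrow> real \<Rightarrow> real \<Rightarrow>
   (real \<Rightarrow> real \<Rightarrow> real) \<Rightarrow> (real \<Rightarrow> real \<Rightarrow> real) \<Rightarrow>
   real \<Rightarrow> real \<Rightarrow> real \<Rightarrow> real \<Rightarrow> bool" where
  "equilibrium \<Lambda> \<mu> r k \<gamma>1 \<gamma>2 v1 v2 F1 F2 S V I1 I2 \<longleftrightarrow>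
     S \<ge> 0 \<and> V \<ge> 0 \<and> I1 \<ge> 0 \<and> I2 \<ge> 0 \<and>
     \<Lambda> - F1 S I1 - F2 S I2 - (r + \<mu>) * S = 0 \<and>
     r * S - (\<mu> + k * I2) * V = 0 \<and>
     F1 S I1 - (\<gamma>1 + v1 + \<mu>) * I1 = 0 \<and>
     F2 S I2 + k * I2 * V - (\<gamma>2 + v2 + \<mu>) * I2 = 0"

definition E1_equilibrium where
  "E1_equilibrium \<Lambda> \<mu> r k \<gamma>1 \<gamma>2 v1 v2 F1 F2 S V I1 \<longleftrightarrow>
     S > 0 \<and> V > 0 \<and> I1 > 0 \<and> equilibrium \<Lambda> \<mu> r k \<gamma>1 \<gamma>2 v1 v2 F1 F2 S V I1 0"

definition E2_equilibrium where
  "E2_equilibrium \<Lambda> \<mu> r k \<gamma>1 \<gamma>2 v1 v2 F1 F2 S V I2 \<longleftrightarrow>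
     S > 0 \<and> V > 0 \<and> I2 > 0 \<and> equilibrium \<Lambda> \<mu> r k \<gamma>1 \<gamma>2 v1 v2 F1 F2 S V 0 I2"

end

theory Submission imports Defs begin


lemma deriv_within_to_at:
  assumes "(g has_real_derivative d) (at x within {0..})" "x > 0"
  shows "(g has_real_derivative d) (at x)"
proof -
  have "(g has_real_derivative d) (at x within {0<..})"
    using assms(1) by (rule has_field_derivative_subset) auto
  moreover have "at x within {0<..} = at x" using assms(2) by (intro at_within_open) auto
  ultimately show ?thesis by simp
qed

lemma cont_from_deriv:
  assumes "\<forall>x\<ge>0. \<exists>d. (g has_real_derivative d) (at x within {0..})" "0 \<le> a"
  shows "continuous_on {a..b} g"
proof -
  have "continuous (at x within {a..b}) g" if "x \<in> {a..b}" for x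
  proof -
    have "x \<ge> 0" using that assms(2) by auto
    then obtain d where "(g has_real_derivative d) (at x within {0..})" using assms(1) by blast
    hence "continuous (at x within {0..}) g" by (rule DERIV_continuous)
    thus ?thesis by (rule continuous_within_subset) (use assms in auto)
  qed
  thus ?thesis by (simp add: continuous_on_eq_continuous_within)
qed

lemma incr_lemma:
  assumes "\<forall>x\<ge>0. \<exists>d>0. (g has_real_derivative d) (at x within {0..})" "0 \<le> a" "a < b"
  shows "g a < g b"
proof (rule DERIV_pos_imp_increasing_open[OF assms(3)])
  fix x assume "a < x" "x < b"
  have "x \<ge> 0" using \<open>a < x\<close> assms(2) by auto
  then obtain d where "d > 0" "(g has_real_derivative d) (at x within {0..})" using assms(1) by blast
  thus "\<exists>y. (g has_real_derivative y) (at x) \<and> 0 < y"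
    using deriv_within_to_at \<open>a < x\<close> assms(2) by force
next
  show "continuous_on {a..b} g" using cont_from_deriv[of g a b] assms by blast
qed

lemma decr_lemma:
  assumes "\<forall>x\<ge>0. \<exists>d\<le>0. (g has_real_derivative d) (at x within {0..})" "0 \<le> a" "a \<le> b"
  shows "g b \<le> g a"
proof (rule DERIV_nonpos_imp_decreasing_open[OF assms(3)])
  fix x assume "a < x" "x < b"
  have "x \<ge> 0" using \<open>a < x\<close> assms(2) by auto
  then obtain d where "d \<le> 0" "(g has_real_derivative d) (at x within {0..})" using assms(1) by blast
  thus "\<exists>y. (g has_real_derivative y) (at x) \<and> y \<le> 0"
    using deriv_within_to_at \<open>a < x\<close> assms(2) by force
next
  show "continuous_on {a..b} g" using cont_from_deriv[of g a b] assms by blast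
qed

lemma C2_cont: assumes "C2_on g A" shows "continuous_on A g"
proof -
  from assms obtain Dg where "\<forall>x\<in>A. (g has_derivative blinfun_apply (Dg x)) (at x within A)"
    unfolding C2_on_def by blast
  thus ?thesis
    by (auto simp: continuous_on_eq_continuous_within intro: has_derivative_continuous)
qed

context
  fixes F f :: "real \<Rightarrow> real \<Rightarrow> real"
  assumes H: "incidence_hyps F f"
begin

lemma ih_parts:
  shows "\<forall>S\<ge>0. \<forall>I\<ge>0. F S I = I * f S I"
    and "C2_on (\<lambda>p. f (fst p) (snd p)) quadrant"
    and "\<forall>S\<ge>0. \<forall>I\<ge>0. F S I \<ge> 0 \<and> f S I \<ge> 0"
    and "\<forall>I\<ge>0. F 0 I = 0"
    and "\<forall>S\<ge>0. F S 0 = 0"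
    and "\<forall>S\<ge>0. \<forall>I\<ge>0. \<exists>d>0. ((\<lambda>s. f s I) has_real_derivative d) (at S within {0..})"
    and "\<forall>S\<ge>0. \<forall>I\<ge>0. \<exists>d\<le>0. ((\<lambda>i. f S i) has_real_derivative d) (at I within {0..})"
  using H unfolding incidence_hyps_def by auto

lemma ih_eq: "S \<ge> 0 \<Longrightarrow> I \<ge> 0 \<Longrightarrow> F S I = I * f S I"
  using ih_parts(1) by blast

lemma ih_F0: "S \<ge> 0 \<Longrightarrow> F S 0 = 0"
  using ih_parts(5) by blast

lemma ih_nonneg: "S \<ge> 0 \<Longrightarrow> I \<ge> 0 \<Longrightarrow> f S I \<ge> 0 \<and> F S I \<ge> 0"
  using ih_parts(3) by blast

lemma ih_f0: "I > 0 \<Longrightarrow> f 0 I = 0"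
proof -
  assume "I > 0"
  have "F 0 I = 0" using ih_parts(4) \<open>I > 0\<close> by simp
  moreover have "F 0 I = I * f 0 I" using ih_eq \<open>I > 0\<close> by auto
  ultimately show ?thesis using \<open>I > 0\<close> by simp
qed

lemma ih_monoS: "0 \<le> s \<Longrightarrow> s < s' \<Longrightarrow> I \<ge> 0 \<Longrightarrow> f s I < f s' I"
proof -
  assume a: "0 \<le> s" "s < s'" "I \<ge> 0"
  have "\<forall>x\<ge>0. \<exists>d>0. ((\<lambda>s. f s I) has_real_derivative d) (at x within {0..})"
    using ih_parts(6) a(3) by blast
  from incr_lemma[OF this a(1,2)] show ?thesis by simp
qed

lemma ih_monoS': "0 \<le> s \<Longrightarrow> s \<le> s' \<Longrightarrow> I \<ge> 0 \<Longrightarrow> f s I \<le> f s' I"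
  using ih_monoS[of s s' I] by (cases "s = s'") auto

lemma ih_monoI: "S \<ge> 0 \<Longrightarrow> 0 \<le> i \<Longrightarrow> i \<le> i' \<Longrightarrow> f S i' \<le> f S i"
proof -
  assume a: "S \<ge> 0" "0 \<le> i" "i \<le> i'"
  have "\<forall>x\<ge>0. \<exists>d\<le>0. ((\<lambda>i. f S i) has_real_derivative d) (at x within {0..})"
    using ih_parts(7) a(1) by blast
  from decr_lemma[OF this a(2,3)] show ?thesis by simp
qed

lemma ih_cont: "continuous_on quadrant (\<lambda>p. f (fst p) (snd p))"
  using C2_cont[OF ih_parts(2)] .

lemma ih_sigma:
  assumes "S0 \<ge> 0" "((\<lambda>I. F S0 I) has_real_derivative \<sigma>) (at 0 within {0..})"
  shows "\<sigma> = f S0 0"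
proof -
  have "((\<lambda>y. (F S0 y - F S0 0) / (y - 0)) \<longlongrightarrow> \<sigma>) (at 0 within {0..})"
    using assms(2) by (simp add: has_field_derivative_iff)
  hence "((\<lambda>y. (F S0 y - F S0 0) / (y - 0)) \<longlongrightarrow> \<sigma>) (at_right 0)"
    by (rule tendsto_within_subset) auto
  moreover have "\<forall>\<^sub>F y in at_right 0. (F S0 y - F S0 0) / (y - 0) = f S0 y"
    using eventually_at_right_less[of 0] 
    by eventually_elim (use ih_eq ih_F0 assms(1) in auto)
  ultimately have l1: "((\<lambda>y. f S0 y) \<longlongrightarrow> \<sigma>) (at_right 0)"
    using tendsto_cong by fastforce
  have "continuous (at (S0, 0) within quadrant) (\<lambda>p. f (fst p) (snd p))"
    using ih_cont assms(1) unfolding quadrant_def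
    by (simp add: continuous_on_eq_continuous_within)
  moreover have "((\<lambda>y. (S0, y)) \<longlongrightarrow> (S0, 0)) (at_right 0)"
    by (auto intro!: tendsto_eq_intros)
  moreover have "\<forall>\<^sub>F y in at_right 0. (S0, y) \<in> quadrant"
    using eventually_at_right_less[of 0] 
    by eventually_elim (use assms(1) in \<open>auto simp: quadrant_def\<close>)
  ultimately have "((\<lambda>y. f S0 y) \<longlongrightarrow> f S0 0) (at_right 0)"
    using continuous_within_tendsto_compose[of "(S0,0)" quadrant "\<lambda>p. f (fst p) (snd p)"
        "\<lambda>y. (S0,y)" "at_right 0"] by auto
  with l1 show ?thesis using tendsto_unique[OF trivial_limit_at_right_real] by blast
qed

end

lemma E1_facts:
  assumes H1: "incidence_hyps F1 f1" and H2: "incidence_hyps F2 f2"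
    and E: "E1_equilibrium \<Lambda> \<mu> r k \<gamma>1 \<gamma>2 v1 v2 F1 F2 S V I1"
    and pos: "r + \<mu> > 0" "\<mu> > 0"
  shows "S > 0 \<and> V > 0 \<and> I1 > 0 \<and> f1 S I1 = \<gamma>1 + v1 + \<mu> \<and>
         S = (\<Lambda> - (\<gamma>1 + v1 + \<mu>) * I1) / (r + \<mu>) \<and> V = r * S / \<mu>"
proof -
  from E have p: "S > 0" "V > 0" "I1 > 0" and eq: "equilibrium \<Lambda> \<mu> r k \<gamma>1 \<gamma>2 v1 v2 F1 F2 S V I1 0"
    unfolding E1_equilibrium_def by auto
  have F20: "F2 S 0 = 0" using ih_F0[OF H2] p by simp
  have FI: "F1 S I1 = I1 * f1 S I1" using ih_eq[OF H1] p by simp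
  from eq F20 have e1: "\<Lambda> - F1 S I1 - (r + \<mu>) * S = 0" and e2: "r * S - \<mu> * V = 0"
    and e3: "F1 S I1 - (\<gamma>1 + v1 + \<mu>) * I1 = 0"
    unfolding equilibrium_def by auto
  from e3 FI p have fe: "f1 S I1 = \<gamma>1 + v1 + \<mu>"
    by (metis eq_iff_diff_eq_0 mult.commute mult_cancel_left less_irrefl)
  from e1 e3 have "S = (\<Lambda> - (\<gamma>1 + v1 + \<mu>) * I1) / (r + \<mu>)" using pos
    by (simp add: field_simps)
  moreover from e2 pos have "V = r * S / \<mu>" by (simp add: field_simps)
  ultimately show ?thesis using p fe by blast
qed

lemma E2_facts:
  assumes H1: "incidence_hyps F1 f1" and H2: "incidence_hyps F2 f2"
    and E: "E2_equilibrium \<Lambda> \<mu> r k \<gamma>1 \<gamma>2 v1 v2 F1 F2 S V I"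
  shows "S > 0 \<and> V > 0 \<and> I > 0 \<and> r * S = (\<mu> + k * I) * V \<and>
         f2 S I + k * V = \<gamma>2 + v2 + \<mu> \<and>
         S * \<mu> * (r + \<mu> + k * I) = (\<Lambda> - (\<gamma>2 + v2 + \<mu>) * I) * (\<mu> + k * I) \<and>
         \<Lambda> - F2 S I - (r + \<mu>) * S = 0"
proof -
  from E have p: "S > 0" "V > 0" "I > 0" and eq: "equilibrium \<Lambda> \<mu> r k \<gamma>1 \<gamma>2 v1 v2 F1 F2 S V 0 I"
    unfolding E2_equilibrium_def by auto
  have F10: "F1 S 0 = 0" using ih_F0[OF H1] p by simp
  have FI: "F2 S I = I * f2 S I" using ih_eq[OF H2] p by simp
  from eq F10 have e1: "\<Lambda> - F2 S I - (r + \<mu>) * S = 0" and e2: "r * S = (\<mu> + k * I) * V"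
    and e3: "F2 S I + k * I * V - (\<gamma>2 + v2 + \<mu>) * I = 0"
    unfolding equilibrium_def by auto
  from e3 FI have "I * (f2 S I + k * V - (\<gamma>2 + v2 + \<mu>)) = 0" by (simp add: algebra_simps)
  with p have fe: "f2 S I + k * V = \<gamma>2 + v2 + \<mu>" by simp
  have fe': "f2 S I = \<gamma>2 + v2 + \<mu> - k * V" using fe by simp
  have "F2 S I = I * (\<gamma>2 + v2 + \<mu>) - k * I * V" unfolding FI fe' by (simp add: algebra_simps)
  with e1 have e1': "\<Lambda> - I * (\<gamma>2 + v2 + \<mu>) + k * I * V - (r + \<mu>) * S = 0" by simp
  have "(\<Lambda> - I * (\<gamma>2 + v2 + \<mu>) + k * I * V - (r + \<mu>) * S) * (\<mu> + k * I) = 0"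
    using e1' by simp
  hence "(\<Lambda> - I * (\<gamma>2 + v2 + \<mu>)) * (\<mu> + k * I) + k * I * ((\<mu> + k * I) * V) - (r + \<mu>) * S * (\<mu> + k * I) = 0"
    by (simp add: algebra_simps)
  hence "(\<Lambda> - I * (\<gamma>2 + v2 + \<mu>)) * (\<mu> + k * I) + k * I * (r * S) - (r + \<mu>) * S * (\<mu> + k * I) = 0"
    using e2 by simp
  hence "S * \<mu> * (r + \<mu> + k * I) = (\<Lambda> - (\<gamma>2 + v2 + \<mu>) * I) * (\<mu> + k * I)"
    by (simp add: algebra_simps)
  thus ?thesis using p e2 fe e1 by blast
qed

lemma S_compare:
  fixes \<mu> r k a c S S' y1 y2 :: real
  assumes "\<mu> > 0" "k > 0" "r > 0" "y1 < y2" "y1 > 0"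
    and "S * \<mu> * k * (y1 + r) = (c - a * y1) * y1"
    and "S' * \<mu> * k * (y2 + r) = (c - a * y2) * y2"
    and Q: "r * c - a * y1 * y2 - a * r * (y1 + y2) \<le> 0"
  shows "S' \<le> S"
proof -
  have "(S - S') * \<mu> * k * (y1 + r) * (y2 + r) =
        (S * \<mu> * k * (y1 + r)) * (y2 + r) - (S' * \<mu> * k * (y2 + r)) * (y1 + r)"
    by (simp add: algebra_simps)
  also have "\<dots> = (c - a * y1) * y1 * (y2 + r) - (c - a * y2) * y2 * (y1 + r)"
    using assms(6,7) by simp
  also have "\<dots> = (y1 - y2) * (r * c - a * y1 * y2 - a * r * (y1 + y2))"
    by (simp add: algebra_simps)
  finally have eq: "(S - S') * (\<mu> * k * (y1 + r) * (y2 + r)) = (y1 - y2) * (r * c - a * y1 * y2 - a * r * (y1 + y2))"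
    by (simp add: algebra_simps)
  have "(y1 - y2) * (r * c - a * y1 * y2 - a * r * (y1 + y2)) \<ge> 0"
    using assms(4) Q by (simp add: mult_nonpos_nonpos)
  moreover have "\<mu> * k * (y1 + r) * (y2 + r) > 0" using assms by simp
  ultimately have "(S - S') \<ge> 0" using eq zero_le_mult_iff by (metis not_le)
  thus ?thesis by simp
qed

lemma cont_curve:
  assumes "continuous_on quadrant (\<lambda>q. f (fst q) (snd q))" "continuous_on A p"
    "\<forall>x\<in>A. p x \<ge> 0 \<and> x \<ge> 0"
  shows "continuous_on A (\<lambda>x. f (p x) x)"
proof -
  have c: "continuous_on A (\<lambda>x. (p x, x))" by (intro continuous_intros assms)
  have "(\<lambda>x. (p x, x)) ` A \<subseteq> quadrant" using assms(3) by (auto simp: quadrant_def)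
  from continuous_on_compose2[OF assms(1) c this] show ?thesis by simp
qed

lemma part1_iff:
  assumes pos: "\<Lambda> > 0" "\<mu> > 0" "r > 0" "\<gamma>1 > 0" "v1 \<ge> 0"
    and H1: "incidence_hyps F1 f1" and H2: "incidence_hyps F2 f2"
    and sigma1: "((\<lambda>I. F1 (\<Lambda> / (r + \<mu>)) I) has_real_derivative \<sigma>1) (at 0 within {0..})"
  shows "(\<exists>S V I1. E1_equilibrium \<Lambda> \<mu> r k \<gamma>1 \<gamma>2 v1 v2 F1 F2 S V I1)
        \<longleftrightarrow> \<sigma>1 / (\<gamma>1 + v1 + \<mu>) > 1"
proof -
  define a1 where "a1 = \<gamma>1 + v1 + \<mu>"
  have a1: "a1 > 0" using pos unfolding a1_def by simp
  define S0 where "S0 = \<Lambda> / (r + \<mu>)"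
  have S0: "S0 > 0" using pos unfolding S0_def by simp
  have sig: "\<sigma>1 = f1 S0 0" using ih_sigma[OF H1, of S0 \<sigma>1] S0 sigma1 unfolding S0_def by simp
  show ?thesis unfolding a1_def[symmetric]
  proof
    assume "\<exists>S V I1. E1_equilibrium \<Lambda> \<mu> r k \<gamma>1 \<gamma>2 v1 v2 F1 F2 S V I1"
    then obtain S V I1 where E: "E1_equilibrium \<Lambda> \<mu> r k \<gamma>1 \<gamma>2 v1 v2 F1 F2 S V I1" by blast
    from E1_facts[OF H1 H2 E] pos have F: "S > 0" "I1 > 0" "f1 S I1 = a1"
      "S = (\<Lambda> - a1 * I1) / (r + \<mu>)" unfolding a1_def by auto
    have "S < S0" unfolding F(4) S0_def using pos a1 F(2)
      by (simp add: divide_strict_right_mono)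
    have "f1 S I1 \<le> f1 S 0" using ih_monoI[OF H1, of S 0 I1] F by simp
    also have "\<dots> < f1 S0 0" using ih_monoS[OF H1, of S S0 0] F \<open>S < S0\<close> by simp
    finally have "a1 < \<sigma>1" using F sig by simp
    thus "\<sigma>1 / a1 > 1" using a1 by simp
  next
    assume "\<sigma>1 / a1 > 1"
    hence gt: "\<sigma>1 > a1" using a1 by (simp add: field_simps)
    define g where "g = (\<lambda>I. f1 ((\<Lambda> - a1 * I) / (r + \<mu>)) I)"
    define b where "b = \<Lambda> / a1"
    have b: "b > 0" using pos a1 unfolding b_def by simp
    have Sb: "(\<Lambda> - a1 * x) / (r + \<mu>) \<ge> 0" if "x \<le> b" for x
    proof -
      have "a1 * x \<le> \<Lambda>" using that a1 unfolding b_def by (simp add: field_simps)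
      thus ?thesis using pos by simp
    qed
    have cont: "continuous_on {0..b} g" unfolding g_def
      by (rule cont_curve[OF ih_cont[OF H1]]) (use pos Sb in \<open>auto intro!: continuous_intros\<close>)
    have g0: "g 0 = \<sigma>1" unfolding g_def sig S0_def by simp
    have gb: "g b = 0" unfolding g_def b_def using a1 pos ih_f0[OF H1, of "\<Lambda>/a1"] by simp
    obtain I where I: "0 \<le> I" "I \<le> b" "g I = a1"
      using IVT2'[of g b a1 0] cont g0 gb gt a1 b by auto
    have "I \<noteq> 0" using I g0 gt by auto
    have "I \<noteq> b" using I gb a1 by auto
    define S where "S = (\<Lambda> - a1 * I) / (r + \<mu>)"
    have "a1 * I < \<Lambda>" using I \<open>I \<noteq> b\<close> a1 unfolding b_def by (simp add: field_simps)
    hence Sp: "S > 0" unfolding S_def using pos by simp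
    have Ip: "I > 0" using I \<open>I \<noteq> 0\<close> by simp
    have fS: "f1 S I = a1" using I unfolding g_def S_def by simp
    have Seq: "(r + \<mu>) * S = \<Lambda> - a1 * I" unfolding S_def using pos by simp
    have Vp: "r * S / \<mu> > 0" using Sp pos by simp
    have FI: "F1 S I = I * a1" using ih_eq[OF H1, of S I] Sp Ip fS by simp
    have F20: "F2 S 0 = 0" using ih_F0[OF H2, of S] Sp by simp
    have "E1_equilibrium \<Lambda> \<mu> r k \<gamma>1 \<gamma>2 v1 v2 F1 F2 S (r * S / \<mu>) I"
      unfolding E1_equilibrium_def equilibrium_def
      using Sp Ip Vp pos FI F20 Seq
      by (simp add: a1_def algebra_simps)
    thus "\<exists>S V I1. E1_equilibrium \<Lambda> \<mu> r k \<gamma>1 \<gamma>2 v1 v2 F1 F2 S V I1" by blast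
  qed
qed

lemma part1_unique:
  assumes pos: "\<Lambda> > 0" "\<mu> > 0" "r > 0" "\<gamma>1 > 0" "v1 \<ge> 0"
    and H1: "incidence_hyps F1 f1" and H2: "incidence_hyps F2 f2"
  shows "\<forall>S V I1 S' V' I1'.
          E1_equilibrium \<Lambda> \<mu> r k \<gamma>1 \<gamma>2 v1 v2 F1 F2 S V I1 \<longrightarrow>
          E1_equilibrium \<Lambda> \<mu> r k \<gamma>1 \<gamma>2 v1 v2 F1 F2 S' V' I1' \<longrightarrow>
          (S, V, I1) = (S', V', I1')"
proof (intro allI impI)
  define a1 where "a1 = \<gamma>1 + v1 + \<mu>"
  have a1: "a1 > 0" using pos unfolding a1_def by simp
  have key: False if E: "E1_equilibrium \<Lambda> \<mu> r k \<gamma>1 \<gamma>2 v1 v2 F1 F2 S V I"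
    and E': "E1_equilibrium \<Lambda> \<mu> r k \<gamma>1 \<gamma>2 v1 v2 F1 F2 S' V' I'" and lt: "I < I'" for S V I S' V' I'
  proof -
    from E1_facts[OF H1 H2 E] pos have F: "S > 0" "I > 0" "f1 S I = a1"
      "S = (\<Lambda> - a1 * I) / (r + \<mu>)" unfolding a1_def by auto
    from E1_facts[OF H1 H2 E'] pos have F': "S' > 0" "I' > 0" "f1 S' I' = a1"
      "S' = (\<Lambda> - a1 * I') / (r + \<mu>)" unfolding a1_def by auto
    have "S' < S" unfolding F(4) F'(4) using pos a1 lt
      by (simp add: divide_strict_right_mono)
    have "f1 S' I' \<le> f1 S' I" using ih_monoI[OF H1, of S' I I'] F F' lt by simp
    also have "\<dots> < f1 S I" using ih_monoS[OF H1, of S' S I] F F' \<open>S' < S\<close> by simp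
    finally show False using F F' by simp
  qed
  fix S V I1 S' V' I1'
  assume E: "E1_equilibrium \<Lambda> \<mu> r k \<gamma>1 \<gamma>2 v1 v2 F1 F2 S V I1"
    and E': "E1_equilibrium \<Lambda> \<mu> r k \<gamma>1 \<gamma>2 v1 v2 F1 F2 S' V' I1'"
  have "I1 = I1'" using key[OF E E'] key[OF E' E] by (metis linorder_neqE)
  thus "(S, V, I1) = (S', V', I1')"
    using E1_facts[OF H1 H2 E] E1_facts[OF H1 H2 E'] pos by auto
qed

lemma part2_iff:
  assumes pos: "\<Lambda> > 0" "\<mu> > 0" "r > 0" "k > 0" "\<gamma>2 > 0" "v2 \<ge> 0"
    and H1: "incidence_hyps F1 f1" and H2: "incidence_hyps F2 f2"
    and sigma2: "((\<lambda>I. F2 (\<Lambda> / (r + \<mu>)) I) has_real_derivative \<sigma>2) (at 0 within {0..})"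
  shows "(\<exists>S V I2. E2_equilibrium \<Lambda> \<mu> r k \<gamma>1 \<gamma>2 v1 v2 F1 F2 S V I2)
        \<longleftrightarrow> \<sigma>2 / (\<gamma>2 + v2 + \<mu>)
              + k * r * \<Lambda> / ((\<gamma>2 + v2 + \<mu>) * \<mu> * (r + \<mu>)) > 1"
proof -
  define a2 where "a2 = \<gamma>2 + v2 + \<mu>"
  have a2: "a2 > 0" using pos unfolding a2_def by simp
  define S0 where "S0 = \<Lambda> / (r + \<mu>)"
  have S0: "S0 > 0" using pos unfolding S0_def by simp
  have sig: "\<sigma>2 = f2 S0 0" using ih_sigma[OF H2, of S0 \<sigma>2] S0 sigma2 unfolding S0_def by simp
  have R: "\<sigma>2 / a2 + k * r * \<Lambda> / (a2 * \<mu> * (r + \<mu>)) = (\<sigma>2 + k * r * S0 / \<mu>) / a2"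
  proof -
    have "(\<sigma>2 + k * r * S0 / \<mu>) / a2 = \<sigma>2 / a2 + (k * r * S0 / \<mu>) / a2"
      by (simp add: add_divide_distrib)
    moreover have "(k * r * S0 / \<mu>) / a2 = k * r * \<Lambda> / (a2 * \<mu> * (r + \<mu>))"
      unfolding S0_def by (simp add: ac_simps)
    ultimately show ?thesis by simp
  qed
  have R2: "(\<sigma>2 + k * r * S0 / \<mu>) / a2 > 1 \<longleftrightarrow> \<sigma>2 + k * r * S0 / \<mu> > a2"
    using a2 by (simp add: field_simps)
  show ?thesis unfolding a2_def[symmetric] R R2
  proof
    assume "\<exists>S V I2. E2_equilibrium \<Lambda> \<mu> r k \<gamma>1 \<gamma>2 v1 v2 F1 F2 S V I2"
    then obtain S V I where E: "E2_equilibrium \<Lambda> \<mu> r k \<gamma>1 \<gamma>2 v1 v2 F1 F2 S V I" by blast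
    from E2_facts[OF H1 H2 E] have F: "S > 0" "V > 0" "I > 0" "r * S = (\<mu> + k * I) * V"
      "f2 S I + k * V = a2" "\<Lambda> - F2 S I - (r + \<mu>) * S = 0" unfolding a2_def by auto
    have "F2 S I \<ge> 0" using ih_nonneg[OF H2, of S I] F by simp
    hence "(r + \<mu>) * S \<le> \<Lambda>" using F by simp
    hence SS0: "S \<le> S0" unfolding S0_def using pos by (simp add: field_simps)
    have "f2 S I \<le> f2 S 0" using ih_monoI[OF H2, of S 0 I] F by simp
    also have "\<dots> \<le> f2 S0 0" using ih_monoS'[OF H2, of S S0 0] F SS0 by simp
    finally have f: "f2 S I \<le> \<sigma>2" using sig by simp
    have "\<mu> * V < (\<mu> + k * I) * V" using F pos by simp
    also have "\<dots> = r * S" using F by simp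
    also have "\<dots> \<le> r * S0" using SS0 pos by simp
    finally have "V < r * S0 / \<mu>" using pos by (simp add: field_simps)
    hence "k * V < k * r * S0 / \<mu>" using pos by (simp add: field_simps)
    thus "\<sigma>2 + k * r * S0 / \<mu> > a2" using f F by linarith
  next
    assume gt: "\<sigma>2 + k * r * S0 / \<mu> > a2"
    define Sf where "Sf = (\<lambda>I. (\<Lambda> - a2 * I) * (\<mu> + k * I) / (\<mu> * (r + \<mu> + k * I)))"
    define g where "g = (\<lambda>I. f2 (Sf I) I + k * r * Sf I / (\<mu> + k * I))"
    define b where "b = \<Lambda> / a2"
    have b: "b > 0" using pos a2 unfolding b_def by simp
    have Sb: "Sf x \<ge> 0" if "0 \<le> x" "x \<le> b" for x
    proof -
      have "a2 * x \<le> \<Lambda>" using that a2 unfolding b_def by (simp add: field_simps)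
      thus ?thesis using pos that unfolding Sf_def by simp
    qed
    have contS: "continuous_on {0..b} Sf" unfolding Sf_def
    proof (intro continuous_intros ballI)
      fix x assume "x \<in> {0..b}"
      hence "k * x \<ge> 0" using pos by simp
      hence "r + \<mu> + k * x > 0" using pos by linarith
      thus "\<mu> * (r + \<mu> + k * x) \<noteq> 0" using pos by simp
    qed
    have c1: "continuous_on {0..b} (\<lambda>I. f2 (Sf I) I)"
      by (rule cont_curve[OF ih_cont[OF H2] contS]) (use Sb in auto)
    have c2: "continuous_on {0..b} (\<lambda>I. k * r * Sf I / (\<mu> + k * I))"
    proof (intro continuous_intros contS ballI)
      fix x assume "x \<in> {0..b}"
      hence "k * x \<ge> 0" using pos by simp
      thus "\<mu> + k * x \<noteq> 0" using pos by linarith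
    qed
    have cont: "continuous_on {0..b} g" unfolding g_def
      by (rule continuous_on_add[OF c1 c2])
    have "Sf 0 = S0" unfolding Sf_def S0_def using pos by simp
    hence g0: "g 0 = \<sigma>2 + k * r * S0 / \<mu>" unfolding g_def sig by simp
    have "Sf b = 0" unfolding Sf_def b_def using a2 by simp
    hence gb: "g b = 0" unfolding g_def b_def using a2 pos ih_f0[OF H2, of "\<Lambda>/a2"] by simp
    obtain I where I: "0 \<le> I" "I \<le> b" "g I = a2"
      using IVT2'[of g b a2 0] cont g0 gb gt a2 b by auto
    have "I \<noteq> 0" using I g0 gt by auto
    have "I \<noteq> b" using I gb a2 by auto
    have Ip: "I > 0" using I \<open>I \<noteq> 0\<close> by simp
    define S where "S = Sf I"
    define V where "V = r * S / (\<mu> + k * I)"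
    have "a2 * I < \<Lambda>" using I \<open>I \<noteq> b\<close> a2 unfolding b_def by (simp add: field_simps)
    hence Sp: "S > 0" unfolding S_def Sf_def using pos Ip by (simp add: add_pos_pos)
    have Vp: "V > 0" unfolding V_def using Sp pos Ip by (simp add: add_pos_pos)
    have den: "\<mu> + k * I > 0" using pos Ip by (simp add: add_pos_pos)
    have VS: "r * S = (\<mu> + k * I) * V" unfolding V_def using den by simp
    have fS: "f2 S I + k * V = a2" using I unfolding g_def S_def V_def by simp
    have Seq: "S * (\<mu> * (r + \<mu> + k * I)) = (\<Lambda> - a2 * I) * (\<mu> + k * I)"
    proof -
      have "r + \<mu> + k * I > 0" using den pos by linarith
      hence "\<mu> * (r + \<mu> + k * I) \<noteq> 0" using pos by simp
      thus ?thesis unfolding S_def Sf_def by simp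
    qed
    have FI: "F2 S I = I * (a2 - k * V)" using ih_eq[OF H2, of S I] Sp Ip fS by simp
    have F10: "F1 S 0 = 0" using ih_F0[OF H1, of S] Sp by simp
    have e1: "\<Lambda> - F2 S I - (r + \<mu>) * S = 0"
    proof -
      have "(\<Lambda> - F2 S I - (r + \<mu>) * S) * (\<mu> + k * I) =
            (\<Lambda> - a2 * I) * (\<mu> + k * I) + k * I * ((\<mu> + k * I) * V) - (r + \<mu>) * S * (\<mu> + k * I)"
        unfolding FI by (simp add: algebra_simps)
      also have "\<dots> = S * (\<mu> * (r + \<mu> + k * I)) + k * I * (r * S) - (r + \<mu>) * S * (\<mu> + k * I)"
        using Seq VS by simp
      also have "\<dots> = 0" by (simp add: algebra_simps)
      finally show ?thesis using den by simp
    qed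
    have "E2_equilibrium \<Lambda> \<mu> r k \<gamma>1 \<gamma>2 v1 v2 F1 F2 S V I"
      unfolding E2_equilibrium_def equilibrium_def
      using Sp Ip Vp F10 e1 VS FI
      by (simp add: a2_def algebra_simps)
    thus "\<exists>S V I2. E2_equilibrium \<Lambda> \<mu> r k \<gamma>1 \<gamma>2 v1 v2 F1 F2 S V I2" by blast
  qed
qed

lemma E2_core:
  assumes pos: "\<Lambda> > 0" "\<mu> > 0" "r > 0" "k > 0"
    and H1: "incidence_hyps F1 f1" and H2: "incidence_hyps F2 f2"
    and E: "E2_equilibrium \<Lambda> \<mu> r k \<gamma>1 \<gamma>2 v1 v2 F1 F2 S V I"
    and E': "E2_equilibrium \<Lambda> \<mu> r k \<gamma>1 \<gamma>2 v1 v2 F1 F2 S' V' I'"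
    and lt: "I < I'"
    and Q: "r * (k * \<Lambda> + (\<gamma>2 + v2 + \<mu>) * \<mu>) - (\<gamma>2 + v2 + \<mu>) * (\<mu> + k * I) * (\<mu> + k * I')
            - (\<gamma>2 + v2 + \<mu>) * r * ((\<mu> + k * I) + (\<mu> + k * I')) \<le> 0"
  shows False
proof -
  define a2 where "a2 = \<gamma>2 + v2 + \<mu>"
  from E2_facts[OF H1 H2 E] have F: "S > 0" "V > 0" "I > 0" "r * S = (\<mu> + k * I) * V"
    "f2 S I + k * V = a2" "S * \<mu> * (r + \<mu> + k * I) = (\<Lambda> - a2 * I) * (\<mu> + k * I)"
    unfolding a2_def by auto
  from E2_facts[OF H1 H2 E'] have F': "S' > 0" "V' > 0" "I' > 0" "r * S' = (\<mu> + k * I') * V'"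
    "f2 S' I' + k * V' = a2" "S' * \<mu> * (r + \<mu> + k * I') = (\<Lambda> - a2 * I') * (\<mu> + k * I')"
    unfolding a2_def by auto
  have s1: "S * \<mu> * k * ((\<mu> + k * I) + r) = ((k * \<Lambda> + a2 * \<mu>) - a2 * (\<mu> + k * I)) * (\<mu> + k * I)"
  proof -
    have "S * \<mu> * k * ((\<mu> + k * I) + r) = k * (S * \<mu> * (r + \<mu> + k * I))" by (simp add: algebra_simps)
    also have "\<dots> = k * ((\<Lambda> - a2 * I) * (\<mu> + k * I))" using F by simp
    finally show ?thesis by (simp add: algebra_simps)
  qed
  have s2: "S' * \<mu> * k * ((\<mu> + k * I') + r) = ((k * \<Lambda> + a2 * \<mu>) - a2 * (\<mu> + k * I')) * (\<mu> + k * I')"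
  proof -
    have "S' * \<mu> * k * ((\<mu> + k * I') + r) = k * (S' * \<mu> * (r + \<mu> + k * I'))" by (simp add: algebra_simps)
    also have "\<dots> = k * ((\<Lambda> - a2 * I') * (\<mu> + k * I'))" using F' by simp
    finally show ?thesis by (simp add: algebra_simps)
  qed
  have SS: "S' \<le> S"
    by (rule S_compare[OF pos(2) pos(4) pos(3) _ _ s1 s2])
       (use pos lt F Q in \<open>auto simp: a2_def add_pos_pos\<close>)
  have "f2 S' I' \<le> f2 S' I" using ih_monoI[OF H2, of S' I I'] F F' lt by simp
  also have "\<dots> \<le> f2 S I" using ih_monoS'[OF H2, of S' S I] F F' SS by simp
  finally have ff: "f2 S' I' \<le> f2 S I" .
  have "(\<mu> + k * I) * V' < (\<mu> + k * I') * V'" using pos F' lt by simp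
  also have "\<dots> = r * S'" using F' by simp
  also have "\<dots> \<le> r * S" using SS pos by simp
  also have "\<dots> = (\<mu> + k * I) * V" using F by simp
  finally have lt2: "(\<mu> + k * I) * V' < (\<mu> + k * I) * V" .
  have dp: "\<mu> + k * I > 0" using pos F by (simp add: add_pos_pos)
  have "V' < V" using lt2 dp mult_less_cancel_left_pos by blast
  hence kv: "k * V' < k * V" using pos(4) by (rule mult_strict_left_mono)
  have "f2 S' I' + k * V' < f2 S I + k * V" using ff kv by (rule add_le_less_mono)
  thus False using F(5) F'(5) by simp
qed

lemma E2_eqI:
  assumes pos: "\<Lambda> > 0" "\<mu> > 0" "r > 0" "k > 0"
    and H1: "incidence_hyps F1 f1" and H2: "incidence_hyps F2 f2"
    and E: "E2_equilibrium \<Lambda> \<mu> r k \<gamma>1 \<gamma>2 v1 v2 F1 F2 S V I"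
    and E': "E2_equilibrium \<Lambda> \<mu> r k \<gamma>1 \<gamma>2 v1 v2 F1 F2 S' V' I"
  shows "(S, V, I) = (S', V', I)"
proof -
  from E2_facts[OF H1 H2 E] have F: "I > 0" "r * S = (\<mu> + k * I) * V"
    "S * \<mu> * (r + \<mu> + k * I) = (\<Lambda> - (\<gamma>2 + v2 + \<mu>) * I) * (\<mu> + k * I)" by auto
  from E2_facts[OF H1 H2 E'] have F': "r * S' = (\<mu> + k * I) * V'"
    "S' * \<mu> * (r + \<mu> + k * I) = (\<Lambda> - (\<gamma>2 + v2 + \<mu>) * I) * (\<mu> + k * I)" by auto
  have p: "\<mu> * (r + \<mu> + k * I) > 0" using pos F by (simp add: add_pos_pos)
  have "S * (\<mu> * (r + \<mu> + k * I)) = S' * (\<mu> * (r + \<mu> + k * I))" using F F' by (simp add: mult.assoc)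
  hence "S = S'" using p by (metis less_irrefl mult_right_cancel)
  moreover have "\<mu> + k * I > 0" using pos F by (simp add: add_pos_pos)
  ultimately have "V = V'" using F F' by simp
  with \<open>S = S'\<close> show ?thesis by simp
qed

lemma E2_unique_gen:
  assumes pos: "\<Lambda> > 0" "\<mu> > 0" "r > 0" "k > 0"
    and H1: "incidence_hyps F1 f1" and H2: "incidence_hyps F2 f2"
    and E: "E2_equilibrium \<Lambda> \<mu> r k \<gamma>1 \<gamma>2 v1 v2 F1 F2 S V I"
    and E': "E2_equilibrium \<Lambda> \<mu> r k \<gamma>1 \<gamma>2 v1 v2 F1 F2 S' V' I'"
    and P: "P I" "P I'"
    and Q: "\<And>x y. P x \<Longrightarrow> P y \<Longrightarrow> x > 0 \<Longrightarrow> y > 0 \<Longrightarrow>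
      r * (k * \<Lambda> + (\<gamma>2 + v2 + \<mu>) * \<mu>) - (\<gamma>2 + v2 + \<mu>) * (\<mu> + k * x) * (\<mu> + k * y)
            - (\<gamma>2 + v2 + \<mu>) * r * ((\<mu> + k * x) + (\<mu> + k * y)) \<le> 0"
  shows "(S, V, I) = (S', V', I')"
proof -
  have Ip: "I > 0" "I' > 0" using E E' unfolding E2_equilibrium_def by auto
  have "I = I'"
  proof (rule ccontr)
    assume "I \<noteq> I'"
    then consider "I < I'" | "I' < I" by linarith
    thus False
    proof cases
      case 1 show False by (rule E2_core[OF pos H1 H2 E E' 1 Q[OF P Ip]])
    next
      case 2 show False by (rule E2_core[OF pos H1 H2 E' E 2 Q[OF P(2) P(1) Ip(2) Ip(1)]])
    qed
  qed
  thus ?thesis using E2_eqI[OF pos H1 H2 E] E' by simp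
qed

lemma Q_a:
  fixes a2 :: real
  assumes pos: "\<Lambda> > 0" "\<mu> > 0" "r > 0" "k > 0" "a2 > 0" "x > 0" "y > 0"
    and D: "- a2 * r * \<mu> - a2 * \<mu>^2 + k * \<Lambda> * r < 0"
  shows "r * (k * \<Lambda> + a2 * \<mu>) - a2 * (\<mu> + k * x) * (\<mu> + k * y)
            - a2 * r * ((\<mu> + k * x) + (\<mu> + k * y)) \<le> 0"
proof -
  have kx: "k * x \<ge> 0" "k * y \<ge> 0" using pos by auto
  have "(\<mu> + k * x) * (\<mu> + k * y) \<ge> \<mu> * \<mu>"
    using kx pos by (intro mult_mono) auto
  hence "a2 * ((\<mu> + k * x) * (\<mu> + k * y)) \<ge> a2 * (\<mu> * \<mu>)" using pos by simp
  moreover have "a2 * r * ((\<mu> + k * x) + (\<mu> + k * y)) \<ge> a2 * r * (2 * \<mu>)"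
    using kx pos by (intro mult_left_mono) auto
  ultimately show ?thesis using D by (simp add: power2_eq_square algebra_simps)
qed

lemma Q_b:
  fixes a2 :: real
  assumes pos: "\<Lambda> > 0" "\<mu> > 0" "r > 0" "k > 0" "a2 > 0"
    and x: "x \<ge> (- r * a2 - a2 * \<mu> + sqrt (r * a2 * (r * a2 + a2 * \<mu> + k * \<Lambda>))) / (a2 * k)"
    and y: "y \<ge> (- r * a2 - a2 * \<mu> + sqrt (r * a2 * (r * a2 + a2 * \<mu> + k * \<Lambda>))) / (a2 * k)"
  shows "r * (k * \<Lambda> + a2 * \<mu>) - a2 * (\<mu> + k * x) * (\<mu> + k * y)
            - a2 * r * ((\<mu> + k * x) + (\<mu> + k * y)) \<le> 0"
proof -
  define sq where "sq = sqrt (r * a2 * (r * a2 + a2 * \<mu> + k * \<Lambda>))"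
  define t where "t = sq / a2"
  have sq0: "sq \<ge> 0" unfolding sq_def using pos by simp
  have sq2: "sq^2 = r * a2 * (r * a2 + a2 * \<mu> + k * \<Lambda>)" unfolding sq_def using pos
    by (simp add: add_nonneg_nonneg)
  have t0: "t \<ge> 0" unfolding t_def using sq0 pos by simp
  have tt: "a2 * (t * t) = r * (r * a2 + a2 * \<mu> + k * \<Lambda>)"
  proof -
    have "a2 * (t * t) = sq^2 / a2" unfolding t_def using pos by (simp add: power2_eq_square)
    also have "\<dots> = r * (r * a2 + a2 * \<mu> + k * \<Lambda>)" unfolding sq2 using pos by simp
    finally show ?thesis .
  qed
  have xt: "\<mu> + k * x + r \<ge> t"
  proof -
    have "k * x \<ge> k * ((- r * a2 - a2 * \<mu> + sq) / (a2 * k))"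
      by (rule mult_left_mono[OF x[folded sq_def]]) (use pos in simp)
    also have "k * ((- r * a2 - a2 * \<mu> + sq) / (a2 * k)) = - r - \<mu> + t"
      unfolding t_def using pos by (simp add: field_simps)
    finally show ?thesis by simp
  qed
  have yt: "\<mu> + k * y + r \<ge> t"
  proof -
    have "k * y \<ge> k * ((- r * a2 - a2 * \<mu> + sq) / (a2 * k))"
      by (rule mult_left_mono[OF y[folded sq_def]]) (use pos in simp)
    also have "k * ((- r * a2 - a2 * \<mu> + sq) / (a2 * k)) = - r - \<mu> + t"
      unfolding t_def using pos by (simp add: field_simps)
    finally show ?thesis by simp
  qed
  have "(\<mu> + k * x + r) * (\<mu> + k * y + r) \<ge> t * t"
    using xt yt t0 by (intro mult_mono) auto
  hence "a2 * ((\<mu> + k * x + r) * (\<mu> + k * y + r)) \<ge> a2 * (t * t)" using pos by simp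
  hence "a2 * ((\<mu> + k * x + r) * (\<mu> + k * y + r)) \<ge> r * (r * a2 + a2 * \<mu> + k * \<Lambda>)" using tt by simp
  thus ?thesis by (simp add: algebra_simps)
qed

theorem mainTheorem4:
  fixes \<Lambda> \<mu> r k \<gamma>1 \<gamma>2 v1 v2 \<sigma>1 \<sigma>2 :: real
    and F1 f1 F2 f2 :: "real \<Rightarrow> real \<Rightarrow> real"
  assumes pos: "\<Lambda> > 0" "\<mu> > 0" "r > 0" "k > 0" "\<gamma>1 > 0" "\<gamma>2 > 0"
    and vnn: "v1 \<ge> 0" "v2 \<ge> 0"
    and H1: "incidence_hyps F1 f1"
    and H2: "incidence_hyps F2 f2"
    and sigma1: "((\<lambda>I. F1 (\<Lambda> / (r + \<mu>)) I) has_real_derivative \<sigma>1) (at 0 within {0..})"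
    and sigma2: "((\<lambda>I. F2 (\<Lambda> / (r + \<mu>)) I) has_real_derivative \<sigma>2) (at 0 within {0..})"
  shows
    "((\<exists>S V I1. E1_equilibrium \<Lambda> \<mu> r k \<gamma>1 \<gamma>2 v1 v2 F1 F2 S V I1)
        \<longleftrightarrow> \<sigma>1 / (\<gamma>1 + v1 + \<mu>) > 1)
     \<and> (\<forall>S V I1 S' V' I1'.
          E1_equilibrium \<Lambda> \<mu> r k \<gamma>1 \<gamma>2 v1 v2 F1 F2 S V I1 \<longrightarrow>
          E1_equilibrium \<Lambda> \<mu> r k \<gamma>1 \<gamma>2 v1 v2 F1 F2 S' V' I1' \<longrightarrow>
          (S, V, I1) = (S', V', I1'))
     \<and> ((\<exists>S V I2. E2_equilibrium \<Lambda> \<mu> r k \<gamma>1 \<gamma>2 v1 v2 F1 F2 S V I2)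
        \<longleftrightarrow> \<sigma>2 / (\<gamma>2 + v2 + \<mu>)
              + k * r * \<Lambda> / ((\<gamma>2 + v2 + \<mu>) * \<mu> * (r + \<mu>)) > 1)
     \<and> (- (\<gamma>2 + v2 + \<mu>) * r * \<mu> - (\<gamma>2 + v2 + \<mu>) * \<mu>^2 + k * \<Lambda> * r < 0 \<longrightarrow>
          (\<forall>S V I2 S' V' I2'.
             E2_equilibrium \<Lambda> \<mu> r k \<gamma>1 \<gamma>2 v1 v2 F1 F2 S V I2 \<longrightarrow>
             E2_equilibrium \<Lambda> \<mu> r k \<gamma>1 \<gamma>2 v1 v2 F1 F2 S' V' I2' \<longrightarrow>
             (S, V, I2) = (S', V', I2')))
     \<and> (- (\<gamma>2 + v2 + \<mu>) * r * \<mu> - (\<gamma>2 + v2 + \<mu>) * \<mu>^2 + k * \<Lambda> * r > 0 \<longrightarrow>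
          (\<forall>S V I2 S' V' I2'.
             E2_equilibrium \<Lambda> \<mu> r k \<gamma>1 \<gamma>2 v1 v2 F1 F2 S V I2 \<longrightarrow>
             E2_equilibrium \<Lambda> \<mu> r k \<gamma>1 \<gamma>2 v1 v2 F1 F2 S' V' I2' \<longrightarrow>
             I2 \<in> {(- r * (\<gamma>2 + v2 + \<mu>) - (\<gamma>2 + v2 + \<mu>) * \<mu>
                     + sqrt (r * (\<gamma>2 + v2 + \<mu>) * (r * (\<gamma>2 + v2 + \<mu>) + (\<gamma>2 + v2 + \<mu>) * \<mu> + k * \<Lambda>)))
                    / ((\<gamma>2 + v2 + \<mu>) * k) .. \<Lambda> / (\<gamma>2 + v2 + \<mu>)} \<longrightarrow>
             I2' \<in> {(- r * (\<gamma>2 + v2 + \<mu>) - (\<gamma>2 + v2 + \<mu>) * \<mu>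
                     + sqrt (r * (\<gamma>2 + v2 + \<mu>) * (r * (\<gamma>2 + v2 + \<mu>) + (\<gamma>2 + v2 + \<mu>) * \<mu> + k * \<Lambda>)))
                    / ((\<gamma>2 + v2 + \<mu>) * k) .. \<Lambda> / (\<gamma>2 + v2 + \<mu>)} \<longrightarrow>
             (S, V, I2) = (S', V', I2')))"
proof -
  have a2: "\<gamma>2 + v2 + \<mu> > 0" using pos vnn by simp
  have p1: "(\<exists>S V I1. E1_equilibrium \<Lambda> \<mu> r k \<gamma>1 \<gamma>2 v1 v2 F1 F2 S V I1)
        \<longleftrightarrow> \<sigma>1 / (\<gamma>1 + v1 + \<mu>) > 1"
    by (rule part1_iff[OF pos(1,2,3,5) vnn(1) H1 H2 sigma1])
  note p2 = part1_unique[OF pos(1,2,3,5) vnn(1) H1 H2, of k \<gamma>2 v2]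
  note p3 = part2_iff[OF pos(1,2,3,4,6) vnn(2) H1 H2 sigma2, of \<gamma>1 v1]
  have p4: "- (\<gamma>2 + v2 + \<mu>) * r * \<mu> - (\<gamma>2 + v2 + \<mu>) * \<mu>^2 + k * \<Lambda> * r < 0 \<longrightarrow>
          (\<forall>S V I2 S' V' I2'.
             E2_equilibrium \<Lambda> \<mu> r k \<gamma>1 \<gamma>2 v1 v2 F1 F2 S V I2 \<longrightarrow>
             E2_equilibrium \<Lambda> \<mu> r k \<gamma>1 \<gamma>2 v1 v2 F1 F2 S' V' I2' \<longrightarrow>
             (S, V, I2) = (S', V', I2'))"
  proof (intro impI allI)
    fix S V I S' V' I'
    assume D: "- (\<gamma>2 + v2 + \<mu>) * r * \<mu> - (\<gamma>2 + v2 + \<mu>) * \<mu>^2 + k * \<Lambda> * r < 0"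
      and E: "E2_equilibrium \<Lambda> \<mu> r k \<gamma>1 \<gamma>2 v1 v2 F1 F2 S V I"
      and E': "E2_equilibrium \<Lambda> \<mu> r k \<gamma>1 \<gamma>2 v1 v2 F1 F2 S' V' I'"
    show "(S, V, I) = (S', V', I')"
      by (rule E2_unique_gen[OF pos(1-4) H1 H2 E E', where P = "\<lambda>_. True"])
         (use Q_a[OF pos(1-4) a2 _ _ D] in auto)
  qed
  have p5: "- (\<gamma>2 + v2 + \<mu>) * r * \<mu> - (\<gamma>2 + v2 + \<mu>) * \<mu>^2 + k * \<Lambda> * r > 0 \<longrightarrow>
          (\<forall>S V I2 S' V' I2'.
             E2_equilibrium \<Lambda> \<mu> r k \<gamma>1 \<gamma>2 v1 v2 F1 F2 S V I2 \<longrightarrow>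
             E2_equilibrium \<Lambda> \<mu> r k \<gamma>1 \<gamma>2 v1 v2 F1 F2 S' V' I2' \<longrightarrow>
             I2 \<in> {(- r * (\<gamma>2 + v2 + \<mu>) - (\<gamma>2 + v2 + \<mu>) * \<mu>
                     + sqrt (r * (\<gamma>2 + v2 + \<mu>) * (r * (\<gamma>2 + v2 + \<mu>) + (\<gamma>2 + v2 + \<mu>) * \<mu> + k * \<Lambda>)))
                    / ((\<gamma>2 + v2 + \<mu>) * k) .. \<Lambda> / (\<gamma>2 + v2 + \<mu>)} \<longrightarrow>
             I2' \<in> {(- r * (\<gamma>2 + v2 + \<mu>) - (\<gamma>2 + v2 + \<mu>) * \<mu>
                     + sqrt (r * (\<gamma>2 + v2 + \<mu>) * (r * (\<gamma>2 + v2 + \<mu>) + (\<gamma>2 + v2 + \<mu>) * \<mu> + k * \<Lambda>)))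
                    / ((\<gamma>2 + v2 + \<mu>) * k) .. \<Lambda> / (\<gamma>2 + v2 + \<mu>)} \<longrightarrow>
             (S, V, I2) = (S', V', I2'))"
  proof (intro impI allI)
    fix S V I S' V' I'
    define lo where "lo = (- r * (\<gamma>2 + v2 + \<mu>) - (\<gamma>2 + v2 + \<mu>) * \<mu>
                     + sqrt (r * (\<gamma>2 + v2 + \<mu>) * (r * (\<gamma>2 + v2 + \<mu>) + (\<gamma>2 + v2 + \<mu>) * \<mu> + k * \<Lambda>)))
                    / ((\<gamma>2 + v2 + \<mu>) * k)"
    assume E: "E2_equilibrium \<Lambda> \<mu> r k \<gamma>1 \<gamma>2 v1 v2 F1 F2 S V I"
      and E': "E2_equilibrium \<Lambda> \<mu> r k \<gamma>1 \<gamma>2 v1 v2 F1 F2 S' V' I'"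
      and i1: "I \<in> {lo .. \<Lambda> / (\<gamma>2 + v2 + \<mu>)}" and i2: "I' \<in> {lo .. \<Lambda> / (\<gamma>2 + v2 + \<mu>)}"
    have QB: "\<And>x y. lo \<le> x \<Longrightarrow> lo \<le> y \<Longrightarrow>
      r * (k * \<Lambda> + (\<gamma>2 + v2 + \<mu>) * \<mu>) - (\<gamma>2 + v2 + \<mu>) * (\<mu> + k * x) * (\<mu> + k * y)
            - (\<gamma>2 + v2 + \<mu>) * r * ((\<mu> + k * x) + (\<mu> + k * y)) \<le> 0"
      unfolding lo_def by (rule Q_b[OF pos(1-4) a2]) (auto simp: algebra_simps)
    show "(S, V, I) = (S', V', I')"
      by (rule E2_unique_gen[OF pos(1-4) H1 H2 E E', where P = "\<lambda>x. lo \<le> x"])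
         (use i1 i2 QB in auto)
  qed
  show ?thesis using p1 p2 p3 p4 p5 by blast
qed

end
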